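(* Let $g$ be an odd positive integer and $j$ an integer with $0\leqslant j\leqslant (g-1)/2$. Then $\beta_-^{\,j+(g-1)/2}\beta_+^{\,g-1}\zeta_{g-2j-1}$ is congruent modulo $J_g$ to $c\,\gamma^{g-1}$ for some positive rational number $c$.
   Context: In $\mathbb{C}[\alpha,\beta,\gamma]$: $\zeta_i=0$ for $i<0$, $\zeta_0=1$, $\zeta_{k+1}=\alpha\zeta_k+k^2(\beta+(-1)^k8)\zeta_{k-1}+2k(k-1)\gamma\zeta_{k-2}$ for $k\geqslant0$; $J_k=(\zeta_k,\zeta_{k+1},\zeta_{k+2})$; $\beta_\pm=\beta\pm8$. *)

theory Defs
  imports Complex_Main "HOL-Computational_Algebra.Polynomial"
begin

text \<open>The ring C[alpha,beta,gamma] is represented as iterated univariate polynomials: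
  innermost variable alpha, then beta, outermost gamma.\<close>

type_synonym R = "complex poly poly poly"

definition cst :: "complex \<Rightarrow> R" where
  "cst c = [:[:[:c:]:]:]"

definition alpha :: R where "alpha = [:[: monom 1 1 :]:]"
definition beta :: R where "beta = [: monom 1 1 :]"
definition gamma :: R where "gamma = monom 1 1"

definition beta_plus :: R where "beta_plus = beta + 8"
definition beta_minus :: R where "beta_minus = beta - 8"

text \<open>zeta_0 = 1, zeta_i = 0 for i < 0, and for k >= 0
  zeta_(k+1) = alpha zeta_k + k^2 (beta + (-1)^k 8) zeta_(k-1) + 2k(k-1) gamma zeta_(k-2).
  The terms with negative index vanish, giving the first two equations.\<close>

fun zeta :: "nat \<Rightarrow> R" where
  "zeta 0 = 1"
| "zeta (Suc 0) = alpha * zeta 0"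
| "zeta (Suc (Suc 0)) = alpha * zeta 1 + of_nat (1^2) * (beta + (-1)^1 * 8) * zeta 0"
| "zeta (Suc (Suc (Suc k))) =
     alpha * zeta (k + 2)
     + of_nat ((k + 2)^2) * (beta + (-1)^(k + 2) * 8) * zeta (k + 1)
     + of_nat (2 * (k + 2) * (k + 1)) * gamma * zeta k"

definition congJ :: "nat \<Rightarrow> R \<Rightarrow> R \<Rightarrow> bool" where
  "congJ k p q \<longleftrightarrow>
     (\<exists>a b c. p - q = a * zeta k + b * zeta (k + 1) + c * zeta (k + 2))"

end

theory Submission
  imports Defs
begin


lemma cst_add: "cst (a + b) = cst a + cst b" by (simp add: cst_def)
lemma cst_mult: "cst (a * b) = cst a * cst b" by (simp add: cst_def)
lemma cst_0[simp]: "cst 0 = 0" by (simp add: cst_def)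
lemma cst_1[simp]: "cst 1 = 1" by (simp add: cst_def one_pCons)
lemma cst_diff: "cst (a - b) = cst a - cst b" by (simp add: cst_def)
lemma cst_of_nat: "cst (of_nat n) = of_nat n"
  by (induction n) (simp_all add: cst_add)
lemma cst_numeral: "cst (numeral k) = numeral k"
  using cst_of_nat[of "numeral k"] by simp

lemma bp_bm: "beta_plus = beta_minus + 16"
  by (simp add: beta_plus_def beta_minus_def)

lemma REC:
  assumes "n \<ge> 1"
  shows "zeta (n+1) = alpha * zeta n + of_nat (n^2) * (if even n then beta_plus else beta_minus) * zeta (n-1)
     + of_nat (2*n*(n-1)) * gamma * zeta (n-2)"
proof -
  consider "n = 1" | k where "n = k + 2" using assms by (metis add_2_eq_Suc' le_iff_add less_one nat_less_le plus_1_eq_Suc add.commute Suc_eq_plus1 not0_implies_Suc)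
  then show ?thesis
  proof cases
    case 1 then show ?thesis by (simp add: beta_minus_def)
  next
    case 2
    then have "n + 1 = Suc (Suc (Suc k))" by simp
    then show ?thesis using 2 by (simp add: beta_minus_def beta_plus_def algebra_simps)
  qed
qed


definition inI :: "nat \<Rightarrow> R \<Rightarrow> bool" where
  "inI g x \<longleftrightarrow> (\<exists>a b c. x = a * zeta g + b * zeta (g + 1) + c * zeta (g + 2))"

lemma inI_0[simp]: "inI g 0" unfolding inI_def
  by (rule exI[of _ 0], rule exI[of _ 0], rule exI[of _ 0], simp)
lemma inI_add: "inI g x \<Longrightarrow> inI g y \<Longrightarrow> inI g (x + y)"
proof -
  assume "inI g x" "inI g y"
  then obtain a b c a' b' c' where "x = a * zeta g + b * zeta (g + 1) + c * zeta (g + 2)"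
    "y = a' * zeta g + b' * zeta (g + 1) + c' * zeta (g + 2)" unfolding inI_def by blast
  then have "x + y = (a+a') * zeta g + (b+b') * zeta (g + 1) + (c+c') * zeta (g + 2)"
    by (simp add: algebra_simps)
  then show ?thesis unfolding inI_def by blast
qed
lemma inI_mult: "inI g x \<Longrightarrow> inI g (r * x)"
proof -
  assume "inI g x"
  then obtain a b c where "x = a * zeta g + b * zeta (g + 1) + c * zeta (g + 2)"
     unfolding inI_def by blast
  then have "r * x = (r*a) * zeta g + (r*b) * zeta (g + 1) + (r*c) * zeta (g + 2)"
    by (simp add: algebra_simps)
  then show ?thesis unfolding inI_def by blast
qed
lemma inI_mult2: "inI g x \<Longrightarrow> inI g (x * r)"
proof -
  assume "inI g x" then have "inI g (r * x)" by (rule inI_mult)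
  moreover have "r * x = x * r" by (rule mult.commute)
  ultimately show ?thesis by simp
qed
lemma inI_neg: "inI g x \<Longrightarrow> inI g (- x)"
proof -
  assume "inI g x" then have "inI g ((-1) * x)" by (rule inI_mult)
  moreover have "(-1) * x = - x" by (rule mult_minus1)
  ultimately show ?thesis by simp
qed
lemma inI_diff: "inI g x \<Longrightarrow> inI g y \<Longrightarrow> inI g (x - y)"
  using inI_add[of g x "- y"] inI_neg[of g y] by (simp only: diff_conv_add_uminus)
lemma inI_zeta: "g \<le> n \<Longrightarrow> n \<le> g + 2 \<Longrightarrow> inI g (zeta n)"
proof -
  assume "g \<le> n" "n \<le> g + 2"
  then consider "n = g" | "n = g+1" | "n = g+2" by linarith
  then show ?thesis
  proof cases
    case 1 then have "zeta n = 1 * zeta g + 0 * zeta (g + 1) + 0 * zeta (g + 2)" by simp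
    then show ?thesis unfolding inI_def by blast
  next
    case 2 then have "zeta n = 0 * zeta g + 1 * zeta (g + 1) + 0 * zeta (g + 2)" by simp
    then show ?thesis unfolding inI_def by blast
  next
    case 3 then have "zeta n = 0 * zeta g + 0 * zeta (g + 1) + 1 * zeta (g + 2)" by simp
    then show ?thesis unfolding inI_def by blast
  qed
qed



lemma alg1: "(z1::'a::comm_ring_1) = a*z2 + k1*b*z3 + k2*c*z4 \<Longrightarrow> k2 * ((c*G)*z4) = G*z1 - a*(G*z2) - k1*b*(G*z3)"
  by (simp add: algebra_simps)

lemma cst_inv_nat: "k \<noteq> 0 \<Longrightarrow> cst (1 / of_nat k) * of_nat k = (1::R)"
proof -
  assume k: "k \<noteq> 0"
  have "cst (1 / of_nat k) * of_nat k = cst (1 / of_nat k * of_nat k)" by (simp only: cst_mult cst_of_nat)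
  also have "1 / of_nat k * of_nat k = (1::complex)" using k by simp
  finally show ?thesis by simp
qed

lemma inI_cancel: "k \<noteq> 0 \<Longrightarrow> inI g (of_nat k * x) \<Longrightarrow> inI g x"
proof -
  assume k: "k \<noteq> 0" and h: "inI g (of_nat k * x)"
  have "inI g (cst (1 / of_nat k) * (of_nat k * x))" using h by (rule inI_mult)
  also have "cst (1 / of_nat k) * (of_nat k * x) = x"
    by (simp only: mult.assoc[symmetric] cst_inv_nat[OF k] mult_1)
  finally show ?thesis .
qed

lemma F:
  assumes "m \<le> g"
  shows "\<And>n. g - m \<le> n \<Longrightarrow> n \<le> g + 2 \<Longrightarrow> inI g (gamma ^ m * zeta n)"
  using assms
proof (induction m)
  case 0 then show ?case by (simp add: inI_zeta)
next
  case (Suc m)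
  show ?case
  proof (cases "g - m \<le> n")
    case True
    then have "inI g (gamma ^ m * zeta n)" using Suc by simp
    then show ?thesis using inI_mult[of g _ gamma] by (simp add: mult.assoc)
  next
    case False
    then have n: "n = g - m - 1" "m < g" using Suc by auto
    define N where "N = g - m + 1"
    have N1: "N \<ge> 1" unfolding N_def by simp
    have r: "zeta (N+1) = alpha * zeta N + of_nat (N^2) * (if even N then beta_plus else beta_minus) * zeta (N-1)
     + of_nat (2*N*(N-1)) * gamma * zeta (N-2)" using REC[OF N1] .
    have i1: "inI g (gamma^m * zeta (N+1))" by (rule Suc.IH) (use n N_def in linarith)+
    have i2: "inI g (gamma^m * zeta N)" by (rule Suc.IH) (use n N_def in linarith)+
    have i3: "inI g (gamma^m * zeta (N-1))" by (rule Suc.IH) (use n N_def in linarith)+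
    have "of_nat (2*N*(N-1)) * (gamma ^ Suc m * zeta (N-2)) =
       gamma^m * zeta (N+1) - alpha * (gamma^m * zeta N) - of_nat (N^2) * (if even N then beta_plus else beta_minus) * (gamma^m * zeta (N-1))"
      using alg1[OF r, of "gamma^m"] by (simp only: power_Suc mult.commute)
    then have "inI g (of_nat (2*N*(N-1)) * (gamma ^ Suc m * zeta (N-2)))"
      by (simp only:) (rule inI_diff[OF inI_diff[OF i1 inI_mult[OF i2]] inI_mult[OF i3]])
    moreover have "(2*N*(N-1)) \<noteq> 0" unfolding N_def using n by auto
    ultimately have "inI g (gamma ^ Suc m * zeta (N-2))" using inI_cancel by blast
    moreover have "N - 2 = n" unfolding N_def using n by auto
    ultimately show ?thesis by simp
  qed
qed


definition cg :: "nat \<Rightarrow> R \<Rightarrow> R \<Rightarrow> bool" where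
  "cg g p q \<longleftrightarrow> inI g (p - q)"

lemma gen_comb: "(k::'a::comm_ring_1)*X = Y1 - Z - l*Y2 \<Longrightarrow> k*c = c1 - l*c2 \<Longrightarrow>
   k*(X - c*G) = (Y1 - c1*G) - Z - l*(Y2 - c2*G)"
proof -
  assume a: "k*X = Y1 - Z - l*Y2" and b: "k*c = c1 - l*c2"
  have "k*(X - c*G) = k*X - (k*c)*G" by (simp add: algebra_simps)
  also have "\<dots> = (Y1 - Z - l*Y2) - (c1 - l*c2)*G" by (simp only: a b)
  also have "\<dots> = (Y1 - c1*G) - Z - l*(Y2 - c2*G)" by (simp add: algebra_simps)
  finally show ?thesis .
qed

lemma combine:
  assumes eq: "of_nat K * X = Y1 - Z - of_nat L * Y2" and K: "K \<noteq> 0"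
    and h1: "cg g Y1 (cst (of_rat q1) * Gs)" and hZ: "inI g Z"
    and h2: "cg g Y2 (cst (of_rat q2) * Gs)"
  shows "cg g X (cst (of_rat ((q1 - of_nat L * q2) / of_nat K)) * Gs)"
proof -
  have c: "of_nat K * of_rat ((q1 - of_nat L * q2) / of_nat K) = of_rat q1 - of_nat L * (of_rat q2 :: complex)"
    using K by (simp add: of_rat_diff of_rat_mult of_rat_divide)
  have c2: "of_nat K * cst (of_rat ((q1 - of_nat L * q2) / of_nat K)) = cst (of_rat q1) - of_nat L * cst (of_rat q2)"
  proof -
    have "of_nat K * cst (of_rat ((q1 - of_nat L * q2) / of_nat K)) = cst (of_nat K * of_rat ((q1 - of_nat L * q2) / of_nat K))"
      by (simp only: cst_mult cst_of_nat)
    also have "\<dots> = cst (of_rat q1 - of_nat L * (of_rat q2 :: complex))" by (simp only: c)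
    also have "\<dots> = cst (of_rat q1) - of_nat L * cst (of_rat q2)" by (simp only: cst_mult cst_of_nat cst_diff)
    finally show ?thesis .
  qed
  have "inI g (of_nat K * (X - cst (of_rat ((q1 - of_nat L * q2) / of_nat K)) * Gs))"
    unfolding gen_comb[OF eq c2]
    using h1 h2 hZ unfolding cg_def by (metis inI_diff inI_mult)
  then show ?thesis unfolding cg_def using K inI_cancel by blast
qed

lemma cg_of_inI: "inI g X \<Longrightarrow> cg g X (cst (of_rat 0) * Gs)"
  unfolding cg_def by simp

lemma soc_u: assumes "g \<ge> 1" shows "inI g (beta_minus * gamma^(g-1))"
proof -
  have r: "zeta 2 = alpha * zeta 1 + beta_minus * zeta 0"
    by (simp add: beta_minus_def numeral_2_eq_2)
  have i1: "inI g (gamma^(g-1) * zeta 2)" by (rule F) (use assms in linarith)+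
  have i2: "inI g (gamma^(g-1) * zeta 1)" by (rule F) (use assms in linarith)+
  have gl: "\<And>z2 z1 z0 a b G::R. z2 = a*z1 + b*z0 \<Longrightarrow> z0 = 1 \<Longrightarrow> b*G = G*z2 - a*(G*z1)"
    by (simp add: algebra_simps)
  have "beta_minus * gamma^(g-1) = gamma^(g-1) * zeta 2 - alpha * (gamma^(g-1) * zeta 1)"
    by (rule gl[OF r]) simp
  then show ?thesis using i1 i2 by (simp add: inI_diff inI_mult)
qed

lemma soc_a: assumes "g \<ge> 1" shows "inI g (alpha * gamma^(g-1))"
proof -
  have i2: "inI g (gamma^(g-1) * zeta 1)" by (rule F) (use assms in linarith)+
  moreover have "zeta 1 = alpha" by simp
  ultimately show ?thesis by (simp add: mult.commute)
qed

lemma h1: assumes "g \<ge> 1" "cg g X (cst a * gamma^(g-1))" shows "inI g (beta_minus * X)"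
proof -
  have "beta_minus * X = beta_minus * (X - cst a * gamma^(g-1)) + cst a * (beta_minus * gamma^(g-1))"
    by (simp add: algebra_simps)
  then show ?thesis using assms soc_u unfolding cg_def by (simp add: inI_add inI_mult)
qed

lemma h2: assumes "g \<ge> 1" "cg g X (cst a * gamma^(g-1))" shows "inI g (alpha * X)"
proof -
  have "alpha * X = alpha * (X - cst a * gamma^(g-1)) + cst a * (alpha * gamma^(g-1))"
    by (simp add: algebra_simps)
  then show ?thesis using assms soc_a unfolding cg_def by (simp add: inI_add inI_mult)
qed

lemma h3: assumes "g \<ge> 1" "cg g X (cst (of_rat q) * gamma^(g-1))"
  shows "cg g (beta_plus * X) (cst (of_rat (16 * q)) * gamma^(g-1))"
proof -
  have e: "cst (of_rat (16 * q)) = 16 * cst (of_rat q)"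
    by (simp only: of_rat_mult cst_mult of_rat_numeral_eq cst_numeral)
  have "beta_plus * X - cst (of_rat (16 * q)) * gamma^(g-1) =
     beta_plus * (X - cst (of_rat q) * gamma^(g-1)) + cst (of_rat q) * (beta_minus * gamma^(g-1))"
    unfolding e bp_bm by (simp add: algebra_simps)
  then show ?thesis using assms soc_u unfolding cg_def by (simp add: inI_add inI_mult)
qed



definition ET :: "nat \<Rightarrow> nat \<Rightarrow> nat \<Rightarrow> R" where
  "ET g T n = beta_minus^(T - (n+1) div 2) * beta_plus^(T - n div 2) * gamma^(g-1-T) * zeta n"

lemma ET_eq: "T - (n+1) div 2 = e1 \<Longrightarrow> T - n div 2 = e2 \<Longrightarrow>
   ET g T n = beta_minus^e1 * beta_plus^e2 * gamma^(g-1-T) * zeta n"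
  by (simp add: ET_def)

lemma ET_shift: "1 \<le> T \<Longrightarrow> T \<le> g-1 \<Longrightarrow> (T-1) - (n+1) div 2 = e1 \<Longrightarrow> (T-1) - n div 2 = e2 \<Longrightarrow>
   ET g (T-1) n = beta_minus^e1 * beta_plus^e2 * (gamma * gamma^(g-1-T)) * zeta n"
proof -
  assume a: "1 \<le> T" "T \<le> g-1" "(T-1) - (n+1) div 2 = e1" "(T-1) - n div 2 = e2"
  have "g - 1 - (T - 1) = Suc (g-1-T)" using a by linarith
  then show ?thesis using a by (simp add: ET_def)
qed

lemma gV: "(z2::'a::comm_ring_1) = a*z1 + K*b*z0 + L*c*zm \<Longrightarrow>
   K*(b*P*G*z0) = P*G*z2 - a*(P*G*z1) - L*(P*(c*G)*zm)"
  by (simp add: algebra_simps)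

lemma gD: "(z2::'a::comm_ring_1) = a*z1 + K*b*z0 + L*c*zm \<Longrightarrow>
   K*(a*(b*P*G*z0)) = a*(P*G*z2) - a*(a*(P*G*z1)) - L*(a*(P*(c*G)*zm))"
  by (simp add: algebra_simps)

lemma REC2: "zeta (n+2) = alpha * zeta (n+1) + of_nat ((n+1)^2) * (if even n then beta_minus else beta_plus) * zeta n
     + of_nat (2*(n+1)*n) * gamma * zeta (n-1)"
proof -
  have r: "zeta (n+1+1) = alpha * zeta (n+1) + of_nat ((n+1)^2) * (if even (n+1) then beta_plus else beta_minus) * zeta (n+1-1)
     + of_nat (2*(n+1)*(n+1-1)) * gamma * zeta (n+1-2)" by (rule REC) simp
  have e: "n+1+1 = n+2" "n+1-1 = n" "n+1-2 = n-1" by simp_all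
  have f: "(if even (n+1) then beta_plus else beta_minus) = (if even n then beta_minus else beta_plus)" by simp
  show ?thesis using r unfolding e f .
qed

lemma FT: "T \<le> g - 1 \<Longrightarrow> T + 1 \<le> k \<Longrightarrow> k \<le> T + 2 \<Longrightarrow> inI g (gamma^(g-1-T) * zeta k)"
  by (rule F) linarith+



lemma combine2:
  assumes eq: "of_nat K * X = Y1 - Z - of_nat L * Y2" and K: "K \<noteq> 0"
    and h1: "cg g Y1 (cst (of_rat q1) * Gs)" and hZ: "inI g Z"
    and h2: "L \<noteq> 0 \<Longrightarrow> cg g Y2 (cst (of_rat q2) * Gs)"
  shows "cg g X (cst (of_rat ((q1 - of_nat L * q2) / of_nat K)) * Gs)"
proof (cases "L = 0")
  case True
  have "of_nat K * X = Y1 - Z - of_nat L * 0" using eq True by simp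
  from combine[OF this K h1 hZ, of 0] show ?thesis using True by (simp add: cg_def)
next
  case False
  show ?thesis using combine[OF eq K h1 hZ h2[OF False]] .
qed

lemma dv_gen: "(2*s + k) div 2 = (s::nat) + k div 2" by presburger
lemma dv_gen2: "(2*s) div 2 = (s::nat)" by presburger

lemma gw1: "(u::'a::comm_ring_1)^p * w^(p+1) * G * z = w * (u^p*w^p*G*z)"
  by (simp add: algebra_simps)

lemma Veven:
  assumes g: "g \<ge> 1" and T: "T = 2*t" "t \<ge> 1" "T \<le> g-1" and n: "n = 2*s" "s \<le> t"
  and IH1: "s < t \<Longrightarrow> \<exists>q>0. cg g (ET g T (n+2)) (cst (of_rat q) * gamma^(g-1))"
  and IHD: "inI g (alpha * ET g T (n+1))"
  and IH2: "s \<ge> 1 \<Longrightarrow> \<exists>q<0. cg g (ET g (T-1) (n-1)) (cst (of_rat q) * gamma^(g-1))"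
  shows "\<exists>q>0. cg g (ET g T n) (cst (of_rat q) * gamma^(g-1))"
proof -
  define p where "p = 2*t - s - 1"
  define G where "G = gamma^(g-1-T)"
  define P where "P = beta_minus^p * beta_plus^(p+1)"
  have r: "zeta (n+2) = alpha * zeta (n+1) + of_nat ((n+1)^2) * beta_minus * zeta n
     + of_nat (2*(n+1)*n) * gamma * zeta (n-1)"
  proof -
    have "even n" using n by simp
    then show ?thesis using REC2[of n] by (simp only: if_True)
  qed
  note eq0 = gV[OF r, of P G]
  have bP: "beta_minus * P = beta_minus^(p+1) * beta_plus^(p+1)" unfolding P_def by (simp only: power_Suc Suc_eq_plus1[symmetric] mult.assoc)
  have E0: "ET g T n = beta_minus * P * G * zeta n"
    unfolding bP G_def by (rule ET_eq) (use T n in \<open>simp add: p_def dv_gen dv_gen2\<close>)+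
  have E1: "ET g T (n+1) = P * G * zeta (n+1)"
    unfolding P_def G_def by (rule ET_eq) (use T n in \<open>simp add: p_def dv_gen dv_gen2\<close>)+
  have eq: "of_nat ((n+1)^2) * ET g T n = P * G * zeta (n+2) - alpha * ET g T (n+1)
      - of_nat (2*(n+1)*n) * (P * (gamma * G) * zeta (n-1))"
    unfolding E0 E1 using eq0 .
  have K: "(n+1)^2 \<noteq> 0" by simp
  obtain q1 where q1: "q1 \<ge> 0" "s < t \<Longrightarrow> q1 > 0" "cg g (P * G * zeta (n+2)) (cst (of_rat q1) * gamma^(g-1))"
  proof (cases "s < t")
    case True
    obtain q where q: "q > 0" "cg g (ET g T (n+2)) (cst (of_rat q) * gamma^(g-1))" using IH1[OF True] by blast
    have "ET g T (n+2) = beta_minus^p * beta_plus^p * G * zeta (n+2)"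
      unfolding G_def by (rule ET_eq) (use T n True in \<open>simp add: p_def dv_gen dv_gen2\<close>)+
    then have "P * G * zeta (n+2) = beta_plus * ET g T (n+2)" unfolding P_def by (simp only: gw1)
    moreover have "cg g (beta_plus * ET g T (n+2)) (cst (of_rat (16*q)) * gamma^(g-1))" by (rule h3[OF g q(2)])
    ultimately have "cg g (P * G * zeta (n+2)) (cst (of_rat (16*q)) * gamma^(g-1))" by (simp only:)
    moreover have "16 * q > 0" using q by simp
    ultimately show ?thesis using that[of "16*q"] by (meson less_imp_le)
  next
    case False
    then have "s = t" using n by simp
    have "inI g (G * zeta (n+2))" unfolding G_def by (rule FT) (use T n \<open>s = t\<close> in linarith)+
    then have "inI g (P * (G * zeta (n+2)))" by (rule inI_mult)
    then have "inI g (P * G * zeta (n+2))" by (simp only: mult.assoc)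
    then have "cg g (P * G * zeta (n+2)) (cst (of_rat 0) * gamma^(g-1))"
      by (rule cg_of_inI)
    moreover have "(0::rat) \<ge> 0" by simp
    ultimately show ?thesis using that[of 0] False by blast
  qed
  obtain q2 where q2: "q2 \<le> 0" "s \<ge> 1 \<Longrightarrow> q2 < 0"
    "2*(n+1)*n \<noteq> 0 \<Longrightarrow> cg g (P * (gamma * G) * zeta (n-1)) (cst (of_rat q2) * gamma^(g-1))"
  proof (cases "s \<ge> 1")
    case True
    obtain q where q: "q < 0" "cg g (ET g (T-1) (n-1)) (cst (of_rat q) * gamma^(g-1))" using IH2[OF True] by blast
    have "ET g (T-1) (n-1) = P * (gamma * G) * zeta (n-1)"
      unfolding P_def G_def by (rule ET_shift) (use T n True in \<open>simp add: p_def dv_gen dv_gen2\<close>)+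
    then show ?thesis using that[of q] q by auto
  next
    case False
    then have "n = 0" using n by simp
    then have "2*(n+1)*n = 0" by simp
    moreover have "\<not> 1 \<le> s" using False by simp
    ultimately show ?thesis using that[of 0] by blast
  qed
  have Z: "inI g (alpha * ET g T (n+1))" by (rule IHD)
  note c = combine2[OF eq K q1(3) Z q2(3)]
  have pos: "(q1 - of_nat (2*(n+1)*n) * q2) / of_nat ((n+1)^2) > 0"
  proof -
    have "of_nat (2*(n+1)*n) * q2 \<le> 0" using q2(1) by (simp add: mult_nonneg_nonpos)
    moreover have "q1 > 0 \<or> of_nat (2*(n+1)*n) * q2 < 0"
    proof (cases "s < t")
      case True then show ?thesis using q1 by simp
    next
      case False
      then have "s \<ge> 1" "n \<ge> 1" using T n by auto
      moreover have "2*(n+1)*n > 0" using \<open>n \<ge> 1\<close> by simp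
      ultimately have "q2 < 0" "of_nat (2*(n+1)*n) > (0::rat)" using q2 of_nat_0_less_iff by blast+
      then show ?thesis by (simp add: mult_pos_neg)
    qed
    ultimately have "q1 - of_nat (2*(n+1)*n) * q2 > 0" using q1(1) by linarith
    then show ?thesis by simp
  qed
  show ?thesis using c pos by blast
qed



lemma gc1: "(w::'a::comm_ring_1) * (u^p*w^p) = u^p*w^(p+1)" by (simp add: algebra_simps)
lemma gu1: "(u::'a::comm_ring_1)^(p+1)*w^(p+1)*G*z = u*(u^p*w^(p+1)*G*z)" by (simp add: algebra_simps)
lemma gc2: "(w::'a::comm_ring_1) * (u^(p+1)*w^(p+1)) = u^(p+1)*w^(p+2)" by (simp add: algebra_simps)
lemma gcom: "(a::'a::comm_ring_1)*(u*X) = u*(a*X)" by (simp add: algebra_simps)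
lemma gP: "(P::'a::comm_ring_1)*G*z = P*(G*z)" by (simp add: algebra_simps)

lemma Vodd:
  assumes g: "g \<ge> 1" and T: "T = 2*t+1" "T \<le> g-1" and n: "n = 2*s+1" "s \<le> t"
  and IH1: "s < t \<Longrightarrow> \<exists>q. cg g (ET g T (n+2)) (cst (of_rat q) * gamma^(g-1))"
  and IHD: "inI g (alpha * ET g T (n+1))"
  and IH2: "\<exists>q>0. cg g (ET g (T-1) (n-1)) (cst (of_rat q) * gamma^(g-1))"
  shows "\<exists>q<0. cg g (ET g T n) (cst (of_rat q) * gamma^(g-1))"
proof -
  define p where "p = 2*t - s"
  define G where "G = gamma^(g-1-T)"
  define P where "P = beta_minus^p * beta_plus^p"
  have r: "zeta (n+2) = alpha * zeta (n+1) + of_nat ((n+1)^2) * beta_plus * zeta n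
     + of_nat (2*(n+1)*n) * gamma * zeta (n-1)"
  proof -
    have "\<not> even n" using n by simp
    then show ?thesis using REC2[of n] by (simp only: if_False)
  qed
  note eq0 = gV[OF r, of P G]
  have bP: "beta_plus * P = beta_minus^p * beta_plus^(p+1)" unfolding P_def by (rule gc1)
  have E0: "ET g T n = beta_plus * P * G * zeta n"
    unfolding bP G_def by (rule ET_eq) (use T n in \<open>simp add: p_def dv_gen dv_gen2\<close>)+
  have E1: "ET g T (n+1) = P * G * zeta (n+1)"
    unfolding P_def G_def by (rule ET_eq) (use T n in \<open>simp add: p_def dv_gen dv_gen2\<close>)+
  have eq: "of_nat ((n+1)^2) * ET g T n = P * G * zeta (n+2) - alpha * ET g T (n+1)
      - of_nat (2*(n+1)*n) * (P * (gamma * G) * zeta (n-1))"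
    unfolding E0 E1 using eq0 .
  have K: "(n+1)^2 \<noteq> 0" by simp
  have Y1: "cg g (P * G * zeta (n+2)) (cst (of_rat 0) * gamma^(g-1))"
  proof (cases "s < t")
    case True
    obtain q where q: "cg g (ET g T (n+2)) (cst (of_rat q) * gamma^(g-1))" using IH1[OF True] by blast
    define p' where "p' = 2*t - s - 1"
    have pp: "p = p' + 1" unfolding p_def p'_def using True by simp
    have "ET g T (n+2) = beta_minus^p' * beta_plus^(p'+1) * G * zeta (n+2)"
      unfolding G_def by (rule ET_eq) (use T n True in \<open>simp add: p'_def dv_gen dv_gen2\<close>)+
    then have "P * G * zeta (n+2) = beta_minus * ET g T (n+2)" unfolding P_def pp by (simp only: gu1)
    moreover have "inI g (beta_minus * ET g T (n+2))" by (rule h1[OF g q])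
    ultimately show ?thesis by (simp only: cg_of_inI)
  next
    case False
    then have "s = t" using n by simp
    have "inI g (G * zeta (n+2))" unfolding G_def by (rule FT) (use T n \<open>s = t\<close> in linarith)+
    then have "inI g (P * (G * zeta (n+2)))" by (rule inI_mult)
    then have "inI g (P * G * zeta (n+2))" by (simp only: gP)
    then show ?thesis by (rule cg_of_inI)
  qed
  obtain q2 where q2: "q2 > 0" "cg g (ET g (T-1) (n-1)) (cst (of_rat q2) * gamma^(g-1))" using IH2 by blast
  have "ET g (T-1) (n-1) = P * (gamma * G) * zeta (n-1)"
    unfolding P_def G_def by (rule ET_shift) (use T n in \<open>simp add: p_def dv_gen dv_gen2\<close>)+
  then have Y2: "cg g (P * (gamma * G) * zeta (n-1)) (cst (of_rat q2) * gamma^(g-1))" using q2 by simp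
  have Z: "inI g (alpha * ET g T (n+1))" by (rule IHD)
  note c = combine[OF eq K Y1 Z Y2]
  have L0: "2*(n+1)*n > 0" using n by simp
  have L: "of_nat (2*(n+1)*n) > (0::rat)" using L0 by (simp only: of_nat_0_less_iff)
  have neg: "(0 - of_nat (2*(n+1)*n) * q2) / of_nat ((n+1)^2) < 0"
  proof -
    have "of_nat (2*(n+1)*n) * q2 > 0" using L q2(1) by simp
    then show ?thesis by simp
  qed
  show ?thesis using c neg by blast
qed

lemma Deven:
  assumes g: "g \<ge> 1" and T: "T = 2*t" "T \<le> g-1" and N: "N = 2*s+1" "s+1 \<le> t"
  and IHD2: "inI g (alpha * ET g T (N+2))"
  and IHV: "\<exists>q. cg g (ET g T (N+1)) (cst (of_rat q) * gamma^(g-1))"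
  and IHD3: "inI g (alpha * ET g (T-1) (N-1))"
  shows "inI g (alpha * ET g T N)"
proof -
  define p where "p = 2*t - s - 2"
  define G where "G = gamma^(g-1-T)"
  define P where "P = beta_minus^(p+1) * beta_plus^(p+1)"
  have r: "zeta (N+2) = alpha * zeta (N+1) + of_nat ((N+1)^2) * beta_plus * zeta N
     + of_nat (2*(N+1)*N) * gamma * zeta (N-1)"
  proof -
    have "\<not> even N" using N by simp
    then show ?thesis using REC2[of N] by (simp only: if_False)
  qed
  note eq0 = gD[OF r, of P G]
  have bP: "beta_plus * P = beta_minus^(p+1) * beta_plus^(p+2)" unfolding P_def by (rule gc2)
  have E0: "ET g T N = beta_plus * P * G * zeta N"
    unfolding bP G_def by (rule ET_eq) (use T N in \<open>simp add: p_def dv_gen dv_gen2\<close>)+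
  have E2: "ET g T (N+2) = beta_minus^p * beta_plus^(p+1) * G * zeta (N+2)"
    unfolding G_def by (rule ET_eq) (use T N in \<open>simp add: p_def dv_gen dv_gen2\<close>)+
  then have E2': "P * G * zeta (N+2) = beta_minus * ET g T (N+2)" unfolding P_def by (simp only: gu1)
  have E1: "ET g T (N+1) = P * G * zeta (N+1)"
    unfolding P_def G_def by (rule ET_eq) (use T N in \<open>simp add: p_def dv_gen dv_gen2\<close>)+
  have E3: "ET g (T-1) (N-1) = P * (gamma * G) * zeta (N-1)"
    unfolding P_def G_def by (rule ET_shift) (use T N in \<open>simp add: p_def dv_gen dv_gen2\<close>)+
  have eq: "of_nat ((N+1)^2) * (alpha * ET g T N) = beta_minus * (alpha * ET g T (N+2))
     - alpha * (alpha * ET g T (N+1)) - of_nat (2*(N+1)*N) * (alpha * ET g (T-1) (N-1))"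
    unfolding E0 E1 E3 gcom[of alpha beta_minus, symmetric] E2'[symmetric] using eq0 .
  obtain q where q: "cg g (ET g T (N+1)) (cst (of_rat q) * gamma^(g-1))" using IHV by blast
  have a1: "inI g (alpha * ET g T (N+1))" by (rule h2[OF g q])
  have "inI g (of_nat ((N+1)^2) * (alpha * ET g T N))" unfolding eq
    by (rule inI_diff[OF inI_diff[OF inI_mult[OF IHD2] inI_mult[OF a1]] inI_mult[OF IHD3]])
  then show ?thesis by (rule inI_cancel[rotated]) simp
qed

lemma Dodd:
  assumes g: "g \<ge> 1" and T: "T = 2*t+1" "T \<le> g-1" and N: "N = 2*s" "s \<le> t"
  and IHD2: "inI g (alpha * ET g T (N+2))"
  and IHV: "\<exists>q. cg g (ET g T (N+1)) (cst (of_rat q) * gamma^(g-1))"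
  and IHD3: "s \<ge> 1 \<Longrightarrow> inI g (alpha * ET g (T-1) (N-1))"
  shows "inI g (alpha * ET g T N)"
proof -
  define p where "p = 2*t - s"
  define G where "G = gamma^(g-1-T)"
  define P where "P = beta_minus^p * beta_plus^(p+1)"
  have r: "zeta (N+2) = alpha * zeta (N+1) + of_nat ((N+1)^2) * beta_minus * zeta N
     + of_nat (2*(N+1)*N) * gamma * zeta (N-1)"
  proof -
    have "even N" using N by simp
    then show ?thesis using REC2[of N] by (simp only: if_True)
  qed
  note eq0 = gD[OF r, of P G]
  have bP: "beta_minus * P = beta_minus^(p+1) * beta_plus^(p+1)" unfolding P_def by (simp only: power_Suc Suc_eq_plus1[symmetric] mult.assoc)
  have E0: "ET g T N = beta_minus * P * G * zeta N"
    unfolding bP G_def by (rule ET_eq) (use T N in \<open>simp add: p_def dv_gen dv_gen2\<close>)+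
  have E2: "ET g T (N+2) = beta_minus^p * beta_plus^p * G * zeta (N+2)"
    unfolding G_def by (rule ET_eq) (use T N in \<open>simp add: p_def dv_gen dv_gen2\<close>)+
  then have E2': "P * G * zeta (N+2) = beta_plus * ET g T (N+2)" unfolding P_def by (simp only: gw1)
  have E1: "ET g T (N+1) = P * G * zeta (N+1)"
    unfolding P_def G_def by (rule ET_eq) (use T N in \<open>simp add: p_def dv_gen dv_gen2\<close>)+
  have eq: "of_nat ((N+1)^2) * (alpha * ET g T N) = beta_plus * (alpha * ET g T (N+2))
     - alpha * (alpha * ET g T (N+1)) - of_nat (2*(N+1)*N) * (alpha * (P * (gamma * G) * zeta (N-1)))"
    unfolding E0 E1 gcom[of alpha beta_plus, symmetric] E2'[symmetric] using eq0 .
  obtain q where q: "cg g (ET g T (N+1)) (cst (of_rat q) * gamma^(g-1))" using IHV by blast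
  have a1: "inI g (alpha * ET g T (N+1))" by (rule h2[OF g q])
  have a3: "inI g (of_nat (2*(N+1)*N) * (alpha * (P * (gamma * G) * zeta (N-1))))"
  proof (cases "s \<ge> 1")
    case True
    have E3: "ET g (T-1) (N-1) = P * (gamma * G) * zeta (N-1)"
      unfolding P_def G_def by (rule ET_shift) (use T N True in \<open>simp add: p_def dv_gen dv_gen2\<close>)+
    show ?thesis using IHD3[OF True] unfolding E3 by (rule inI_mult)
  next
    case False
    then have "N = 0" using N by simp
    then show ?thesis by simp
  qed
  have "inI g (of_nat ((N+1)^2) * (alpha * ET g T N))" unfolding eq
    by (rule inI_diff[OF inI_diff[OF inI_mult[OF IHD2] inI_mult[OF a1]] a3])
  then show ?thesis by (rule inI_cancel[rotated]) simp
qed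



definition VC :: "nat \<Rightarrow> nat \<Rightarrow> nat \<Rightarrow> rat \<Rightarrow> bool" where
  "VC g T n q \<longleftrightarrow> cg g (ET g T n) (cst (of_rat q) * gamma^(g-1))"
definition DC :: "nat \<Rightarrow> nat \<Rightarrow> nat \<Rightarrow> bool" where
  "DC g T n \<longleftrightarrow> inI g (alpha * ET g T n)"
definition PP :: "nat \<Rightarrow> nat \<Rightarrow> nat \<Rightarrow> bool" where
  "PP g T n \<longleftrightarrow> (even (T+n) \<longrightarrow> (\<exists>q. (if even T then q > 0 else q < 0) \<and> VC g T n q))
     \<and> (odd (T+n) \<longrightarrow> DC g T n)"

lemmas Veven' = Veven[folded VC_def DC_def]
lemmas Vodd' = Vodd[folded VC_def DC_def]
lemmas Deven' = Deven[folded VC_def DC_def]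
lemmas Dodd' = Dodd[folded VC_def DC_def]

lemma Dtop: "T \<le> g-1 \<Longrightarrow> DC g T (T+1)"
proof -
  assume T: "T \<le> g-1"
  have "inI g (gamma^(g-1-T) * zeta (T+1))" by (rule FT) (use T in linarith)+
  then have "inI g ((alpha * (beta_minus^(T - (T+1+1) div 2) * beta_plus^(T - (T+1) div 2))) * (gamma^(g-1-T) * zeta (T+1)))"
    by (rule inI_mult)
  moreover have "(alpha * (beta_minus^(T - (T+1+1) div 2) * beta_plus^(T - (T+1) div 2))) * (gamma^(g-1-T) * zeta (T+1))
      = alpha * ET g T (T+1)" unfolding ET_def by (simp only: mult.assoc)
  ultimately show ?thesis unfolding DC_def by (simp only:)
qed

lemma base: assumes g: "g \<ge> 1" and n: "n \<le> 1" shows "PP g 0 n"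
proof (cases "n = 0")
  case True
  have e: "ET g 0 0 = gamma^(g-1)" unfolding ET_def by simp
  have "VC g 0 0 1" unfolding VC_def e cg_def by simp
  then have "\<exists>q>0. VC g 0 0 q" using zero_less_one by blast
  then show ?thesis unfolding PP_def True by simp
next
  case False
  then have "n = 1" using n by simp
  then show ?thesis unfolding PP_def using Dtop[of 0 g] by simp
qed

lemma step:
  assumes g: "odd g" and T: "T \<le> g-1" "T \<ge> 1" and IHT: "\<And>n. n \<le> T \<Longrightarrow> PP g (T-1) n"
  shows "n \<le> T+1 \<Longrightarrow> PP g T n"
proof (induction "T+1-n" arbitrary: n rule: less_induct)
  case less
  have g1: "g \<ge> 1" using g by (cases g) auto
  have IH: "\<And>n'. n < n' \<Longrightarrow> n' \<le> T+1 \<Longrightarrow> PP g T n'"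
  proof -
    fix n' assume a: "n < n'" "n' \<le> T+1"
    then have "T+1-n' < T+1-n" using less.prems by linarith
    then show "PP g T n'" using a(2) by (rule less.hyps)
  qed
  show ?case
  proof (cases "n = T+1")
    case True
    then show ?thesis unfolding PP_def using Dtop[OF T(1)] by simp
  next
    case False
    then have nT: "n \<le> T" using less by simp
    show ?thesis
    proof (cases "even T")
      case eT: True
      then obtain t where t: "T = 2*t" by (auto elim: evenE)
      have t1: "t \<ge> 1" using t T by simp
      show ?thesis
      proof (cases "even n")
        case True
        then obtain s where s: "n = 2*s" by (auto elim: evenE)
        have st: "s \<le> t" using s t nT by simp
        have V: "\<exists>q>0. VC g T n q"
        proof (rule Veven'[OF g1 t t1 T(1) s st])
          assume "s < t"
          then have "PP g T (n+2)" using IH[of "n+2"] s t by simp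
          then show "\<exists>q>0. VC g T (n+2) q"
            unfolding PP_def using eT True by auto
        next
          have "PP g T (n+1)" using IH[of "n+1"] nT by simp
          then show "DC g T (n+1)" unfolding PP_def using eT True by auto
        next
          assume "s \<ge> 1"
          have "PP g (T-1) (n-1)" using IHT[of "n-1"] nT by simp
          moreover have "odd (T-1)" "even (T - 1 + (n-1))" using eT True t1 t s \<open>s \<ge> 1\<close> by auto
          ultimately show "\<exists>q<0. VC g (T-1) (n-1) q"
            unfolding PP_def by auto
        qed
        then show ?thesis unfolding PP_def using eT True by auto
      next
        case False
        then obtain s where s: "n = 2*s+1" by (auto elim: oddE)
        have st: "s+1 \<le> t" using s t nT by simp
        have D: "DC g T n"
        proof (rule Deven'[OF g1 t T(1) s st])
          have "PP g T (n+2)" using IH[of "n+2"] s t st by simp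
          then show "DC g T (n+2)" unfolding PP_def using eT False by auto
        next
          have "PP g T (n+1)" using IH[of "n+1"] nT by simp
          then show "\<exists>q. VC g T (n+1) q" unfolding PP_def using eT False by auto
        next
          have "PP g (T-1) (n-1)" using IHT[of "n-1"] nT by simp
          moreover have "odd (T - 1 + (n-1))" using eT False t1 t s by auto
          ultimately show "DC g (T-1) (n-1)" unfolding PP_def by auto
        qed
        then show ?thesis unfolding PP_def using eT False by auto
      qed
    next
      case oT: False
      then obtain t where t: "T = 2*t+1" by (auto elim: oddE)
      show ?thesis
      proof (cases "even n")
        case False
        then obtain s where s: "n = 2*s+1" by (auto elim: oddE)
        have st: "s \<le> t" using s t nT by simp
        have V: "\<exists>q<0. VC g T n q"
        proof (rule Vodd'[OF g1 t T(1) s st])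
          assume "s < t"
          then have "PP g T (n+2)" using IH[of "n+2"] s t by simp
          then show "\<exists>q. VC g T (n+2) q"
            unfolding PP_def using oT False by auto
        next
          have "PP g T (n+1)" using IH[of "n+1"] nT by simp
          then show "DC g T (n+1)" unfolding PP_def using oT False by auto
        next
          have "PP g (T-1) (n-1)" using IHT[of "n-1"] nT by simp
          moreover have "even (T-1)" "even (T - 1 + (n-1))" using oT False t s by auto
          ultimately show "\<exists>q>0. VC g (T-1) (n-1) q"
            unfolding PP_def by auto
        qed
        then show ?thesis unfolding PP_def using oT False by auto
      next
        case True
        then obtain s where s: "n = 2*s" by (auto elim: evenE)
        have st: "s \<le> t" using s t nT by simp
        have D: "DC g T n"
        proof (rule Dodd'[OF g1 t T(1) s st])
          have "PP g T (n+2)" using IH[of "n+2"] s t st nT by simp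
          then show "DC g T (n+2)" unfolding PP_def using oT True by auto
        next
          have "PP g T (n+1)" using IH[of "n+1"] nT by simp
          then show "\<exists>q. VC g T (n+1) q" unfolding PP_def using oT True by auto
        next
          assume "s \<ge> 1"
          have "PP g (T-1) (n-1)" using IHT[of "n-1"] nT by simp
          moreover have "odd (T - 1 + (n-1))" using oT True t s \<open>s \<ge> 1\<close> by auto
          ultimately show "DC g (T-1) (n-1)" unfolding PP_def by auto
        qed
        then show ?thesis unfolding PP_def using oT True by auto
      qed
    qed
  qed
qed

lemma main: assumes g: "odd g" shows "T \<le> g-1 \<Longrightarrow> n \<le> T+1 \<Longrightarrow> PP g T n"
proof (induction T arbitrary: n)
  case 0
  have "g \<ge> 1" using g by (cases g) auto
  then show ?case using base 0 by simp
next
  case (Suc T)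
  show ?case
  proof (rule step[OF g Suc.prems(1)])
    show "Suc T \<ge> 1" by simp
    show "n \<le> Suc T + 1" by (rule Suc.prems(2))
    fix n' assume "n' \<le> Suc T"
    then show "PP g (Suc T - 1) n'" using Suc.IH Suc.prems(1) by simp
  qed
qed



lemma wpow: assumes g: "g \<ge> 1" and h: "cg g X (cst (of_rat q) * gamma^(g-1))"
  shows "cg g (beta_plus^k * X) (cst (of_rat (16^k * q)) * gamma^(g-1))"
proof (induction k)
  case 0 then show ?case using h by simp
next
  case (Suc k)
  have "cg g (beta_plus * (beta_plus^k * X)) (cst (of_rat (16 * (16^k * q))) * gamma^(g-1))"
    by (rule h3[OF g Suc.IH])
  moreover have "beta_plus * (beta_plus^k * X) = beta_plus^(Suc k) * X" by (simp only: power_Suc mult.assoc)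
  moreover have "16 * (16^k * q) = (16::rat)^(Suc k) * q" by simp
  ultimately show ?case by (simp only:)
qed

lemma galg: "(u::'a::comm_ring_1)^a * w^(b+c) * z = w^b * (u^a * w^c * x^0 * z)"
  by (simp add: power_add algebra_simps)

theorem lemma4p2:
  fixes g j :: nat
  assumes "odd g" and "g > 0" and "j \<le> (g - 1) div 2"
  shows "\<exists>c::rat. c > 0 \<and>
    congJ g (beta_minus ^ (j + (g - 1) div 2) * beta_plus ^ (g - 1) * zeta (g - 2 * j - 1))
            (cst (of_rat c) * gamma ^ (g - 1))"
proof -
  define h where "h = (g-1) div 2"
  have gh: "g = 2*h+1" unfolding h_def using assms(1) by (auto elim: oddE)
  have jh: "j \<le> h" using assms(3) unfolding h_def .
  define n where "n = g - 2*j - 1"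
  have nn: "n = 2*(h-j)" unfolding n_def gh using jh by simp
  have g1: "g \<ge> 1" using assms(2) by simp
  have "PP g (g-1) n" by (rule main[OF assms(1)]) (use nn gh jh in simp)+
  moreover have "even (g - 1 + n)" "even (g-1)" using nn gh by simp_all
  ultimately obtain q where q: "q > 0" "VC g (g-1) n q" unfolding PP_def by auto
  have E: "ET g (g-1) n = beta_minus^(h+j) * beta_plus^(h+j) * gamma^(g-1-(g-1)) * zeta n"
    by (rule ET_eq) (use nn gh jh in \<open>simp add: dv_gen dv_gen2\<close>)+
  have "cg g (beta_plus^(h-j) * ET g (g-1) n) (cst (of_rat (16^(h-j) * q)) * gamma^(g-1))"
    by (rule wpow[OF g1 q(2)[unfolded VC_def]])
  moreover have "beta_plus^(h-j) * ET g (g-1) n = beta_minus ^ (j + (g - 1) div 2) * beta_plus ^ (g - 1) * zeta (g - 2 * j - 1)"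
  proof -
    have e1: "j + (g - 1) div 2 = h + j" unfolding h_def by simp
    have e2: "g - 1 = (h-j) + (h+j)" using gh jh by simp
    show ?thesis unfolding E e1 n_def[symmetric] diff_self_eq_0 by (subst e2) (rule galg[symmetric])
  qed
  moreover have "(16::rat)^(h-j) * q > 0" using q(1) by simp
  ultimately show ?thesis unfolding congJ_def cg_def inI_def by auto
qed


end
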